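(* Let $p=(p_i)_{i\in\mathbb{N}}$ be a cookie environment with $p_i\in[\frac12,1)$ for all $i$, and suppose $\delta=\sum_{i=1}^\infty(2p_i-1)<\infty$. Let $\rho(x)=\mathbb{E}[U_p(x)]-x$, $\nu(x)=\frac1x\mathbb{E}[(U_p(x)-x)^2]$ and $\theta(x)=\frac{2\rho(x)}{\nu(x)}$. Then: \begin{enumerate} \item $\mu=\lim_{x\to\infty}\frac{\mathbb{E}[U_p(x)]}{x}=1$; \item $\lim_{x\to\infty}\theta(x)=\delta$; \item there is a constant $C$ depending only on $p$ such that $\theta(x)\le\delta+C\log^4(x)/\sqrt x$ for all sufficiently large $x$. \end{enumerate}
   Context: For a cookie environment $p$, let $B_1,B_2,\dots$ be independent Bernoulli random variables with $\Pr[B_i=1]=p_i$ ($B_i=1$ is a "success", $B_i=0$ a "failure"). For a positive integer $x$, $U_p(x)=\inf\{k\in\mathbb{N}:\sum_{i=1}^k(1-B_i)=x\}-x$, i.e. the number of successes before the $x$-th failure. *)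

theory Defs
  imports "HOL-Probability.Probability"
begin

text \<open>Cookie environment p: Isabelle index i corresponds to the paper's index i+1.
  Outcome omega :: nat => bool, omega i = True means B_{i+1} = 1 (success).\<close>

definition cookie_space :: "(nat \<Rightarrow> real) \<Rightarrow> (nat \<Rightarrow> bool) measure" where
  "cookie_space p = (\<Pi>\<^sub>M i\<in>(UNIV::nat set). measure_pmf (bernoulli_pmf (p i)))"

definition failures :: "(nat \<Rightarrow> bool) \<Rightarrow> nat \<Rightarrow> nat" where
  "failures \<omega> k = card {i. i < k \<and> \<not> \<omega> i}"

text \<open>U_p(x): number of successes before the x-th failure
  (set to 0 on the null event that fewer than x failures occur).\<close>
definition U :: "nat \<Rightarrow> (nat \<Rightarrow> bool) \<Rightarrow> nat" where
  "U x \<omega> = (if \<exists>k. failures \<omega> k = x then (LEAST k. failures \<omega> k = x) - x else 0)"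

definition cookie_delta :: "(nat \<Rightarrow> real) \<Rightarrow> real" where
  "cookie_delta p = (\<Sum>i. 2 * p i - 1)"

definition EU :: "(nat \<Rightarrow> real) \<Rightarrow> nat \<Rightarrow> real" where
  "EU p x = (\<integral>\<omega>. real (U x \<omega>) \<partial>cookie_space p)"

definition rho :: "(nat \<Rightarrow> real) \<Rightarrow> nat \<Rightarrow> real" where
  "rho p x = EU p x - real x"

definition nu :: "(nat \<Rightarrow> real) \<Rightarrow> nat \<Rightarrow> real" where
  "nu p x = (1 / real x) * (\<integral>\<omega>. (real (U x \<omega>) - real x)\<^sup>2 \<partial>cookie_space p)"

definition theta :: "(nat \<Rightarrow> real) \<Rightarrow> nat \<Rightarrow> real" where
  "theta p x = 2 * rho p x / nu p x"

end

theory Submission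
  imports Defs "HOL-Real_Asymp.Real_Asymp"
begin

definition fl :: "(nat \<Rightarrow> bool) \<Rightarrow> nat \<Rightarrow> nat" where
  "fl \<omega> n = (\<Sum>i<n. if \<omega> i then 0 else 1)"

lemma failures_fl: "failures \<omega> n = fl \<omega> n"
proof (induction n)
  case 0 then show ?case by (simp add: failures_def fl_def)
next
  case (Suc n)
  have "{i. i < Suc n \<and> \<not> \<omega> i} = {i. i < n \<and> \<not> \<omega> i} \<union> (if \<omega> n then {} else {n})" by (auto simp: less_Suc_eq)
  then have "failures \<omega> (Suc n) = failures \<omega> n + (if \<omega> n then 0 else 1)"
    unfolding failures_def by (auto simp: card_insert_if)
  then show ?case using Suc by (simp add: fl_def)
qed

lemma U_fl: "U x \<omega> = (if \<exists>k. fl \<omega> k = x then (LEAST k. fl \<omega> k = x) - x else 0)"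
  by (simp add: U_def failures_fl)

locale cookie =
  fixes p :: "nat \<Rightarrow> real"
  assumes p_bnd: "\<And>i. 1/2 \<le> p i \<and> p i < 1"
  and p_sum: "summable (\<lambda>i. 2 * p i - 1)"
begin

abbreviation "M \<equiv> cookie_space p"

lemma prob: "prob_space M"
  unfolding cookie_space_def by (intro prob_space_PiM prob_space_measure_pmf)

lemma space_M[simp]: "space M = UNIV"
  unfolding cookie_space_def by (simp add: space_PiM)

lemma probU[simp]: "measure M UNIV = 1"
  using prob_space.prob_space[OF prob] by simp

lemma meas_coord[measurable]: "(\<lambda>\<omega>. \<omega> i) \<in> measurable M (count_space UNIV)"
proof -
  have "(\<lambda>\<omega>. \<omega> i) \<in> measurable M (measure_pmf (bernoulli_pmf (p i)))"
    unfolding cookie_space_def by (rule measurable_component_singleton) simp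
  then show ?thesis by (simp add: measurable_def)
qed

lemma meas_fl[measurable]: "(\<lambda>\<omega>. fl \<omega> n) \<in> measurable M (count_space UNIV)"
  unfolding fl_def by measurable

lemma meas_U[measurable]: "(\<lambda>\<omega>. U x \<omega>) \<in> measurable M (count_space UNIV)"
  unfolding U_fl by measurable


abbreviation "MM i \<equiv> measure_pmf (bernoulli_pmf (p i))"

lemma M_def': "M = PiM UNIV MM" by (simp add: cookie_space_def)

lemma indep_coords: "prob_space.indep_vars M MM (\<lambda>i \<omega>. \<omega> i) UNIV"
proof -
  interpret prob_space M by (rule prob)
  interpret P: product_prob_space MM UNIV by unfold_locales
  have rv: "random_variable (MM i) (\<lambda>\<omega>. \<omega> i)" for i
    unfolding M_def' by (rule measurable_component_singleton) simp
  have "distr M (\<Pi>\<^sub>M i\<in>UNIV. MM i) (\<lambda>x. \<lambda>i\<in>UNIV. x i) = M"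
    unfolding M_def' by (simp add: restrict_UNIV)
  also have "\<dots> = (\<Pi>\<^sub>M i\<in>UNIV. distr M (MM i) (\<lambda>\<omega>. \<omega> i))"
    unfolding M_def' by (intro PiM_cong refl P.PiM_component[symmetric]) simp
  finally show ?thesis
    by (subst indep_vars_iff_distr_eq_PiM) (auto intro: rv)
qed

lemma integral_coord: "(\<integral>\<omega>. h (\<omega> j) \<partial>M) = h True * p j + h False * (1 - p j)"
proof -
  interpret P: product_prob_space MM UNIV by unfold_locales
  have "(\<integral>\<omega>. h (\<omega> j) \<partial>M) = (\<integral>b. h b \<partial>distr M (MM j) (\<lambda>\<omega>. \<omega> j))"
    using integral_distr[OF measurable_component_singleton[of j UNIV MM], of h] 
    by (simp add: M_def' measurable_pmf_measure1)
  also have "distr M (MM j) (\<lambda>\<omega>. \<omega> j) = MM j"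
    unfolding M_def' by (rule P.PiM_component) simp
  finally show ?thesis using p_bnd[of j] by simp
qed

lemma bool_bound: "\<bar>(h::bool\<Rightarrow>real) b\<bar> \<le> \<bar>h True\<bar> + \<bar>h False\<bar>"
  by (cases b) auto

lemma indep_step:
  fixes G :: "(nat \<Rightarrow> bool) \<Rightarrow> real"
  assumes Gm: "G \<in> borel_measurable M"
    and Gdep: "\<And>\<omega> \<omega>'. (\<And>i. i < j \<Longrightarrow> \<omega> i = \<omega>' i) \<Longrightarrow> G \<omega> = G \<omega>'"
    and Gb: "\<And>\<omega>. \<bar>G \<omega>\<bar> \<le> B"
  shows "(\<integral>\<omega>. G \<omega> * h (\<omega> j) \<partial>M) = (\<integral>\<omega>. G \<omega> \<partial>M) * (h True * p j + h False * (1 - p j))"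
proof -
  interpret prob_space M by (rule prob)
  define ext :: "(nat \<Rightarrow> bool) \<Rightarrow> nat \<Rightarrow> bool" where "ext f = (\<lambda>i\<in>UNIV. if i < j then f i else False)" for f
  have ext_m: "ext \<in> measurable (PiM {..<j} MM) M"
    unfolding M_def' ext_def
  proof (rule measurable_restrict)
    fix i :: nat
    show "(\<lambda>x. if i < j then x i else False) \<in> measurable (PiM {..<j} MM) (MM i)"
    proof (cases "i < j")
      case True
      have "(\<lambda>x. x i) \<in> measurable (PiM {..<j} MM) (MM i)" using True by (intro measurable_component_singleton) auto
      then show ?thesis using True by simp
    qed simp
  qed
  have G0m: "(G \<circ> ext) \<in> borel_measurable (PiM {..<j} MM)"
    using measurable_comp[OF ext_m Gm] .
  have H0m: "((\<lambda>f. h (f j)) :: (nat \<Rightarrow> bool) \<Rightarrow> real) \<in> borel_measurable (PiM {j} MM)"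
    using measurable_comp[OF measurable_component_singleton[of j "{j}" MM], of h borel]
    by (simp add: measurable_pmf_measure1 comp_def)
  have ind: "indep_var (PiM {..<j} MM) (\<lambda>\<omega>. restrict (\<lambda>i. \<omega> i) {..<j}) (PiM {j} MM) (\<lambda>\<omega>. restrict (\<lambda>i. \<omega> i) {j})"
    by (rule indep_var_restrict[OF indep_coords]) auto
  have ind2: "indep_var borel ((G \<circ> ext) \<circ> (\<lambda>\<omega>. restrict (\<lambda>i. \<omega> i) {..<j})) borel ((\<lambda>f. h (f j)) \<circ> (\<lambda>\<omega>. restrict (\<lambda>i. \<omega> i) {j}))"
    by (rule indep_var_compose[OF ind G0m H0m])
  have e1: "(G \<circ> ext) \<circ> (\<lambda>\<omega>. restrict (\<lambda>i. \<omega> i) {..<j}) = G"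
    by (auto simp: fun_eq_iff ext_def intro!: Gdep[symmetric])
  have e2: "((\<lambda>f. h (f j)) \<circ> (\<lambda>\<omega>. restrict (\<lambda>i. \<omega> i) {j})) = (\<lambda>\<omega>. h (\<omega> j))"
    by (auto simp: fun_eq_iff)
  have ind3: "indep_var borel G borel (\<lambda>\<omega>. h (\<omega> j))" using ind2 unfolding e1 e2 .
  have iG: "integrable M G"
    by (rule integrable_const_bound[where B=B]) (use Gb Gm in auto)
  have hm: "(\<lambda>\<omega>. h (\<omega> j)) \<in> borel_measurable M"
    by (rule measurable_compose[OF meas_coord]) simp
  have iH: "integrable M (\<lambda>\<omega>. h (\<omega> j))"
    by (rule integrable_const_bound[where B="\<bar>h True\<bar> + \<bar>h False\<bar>"]) (use hm in \<open>auto intro!: AE_I2 simp: bool_bound\<close>)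
  show ?thesis
    using indep_var_lebesgue_integral[OF ind3 iG iH] integral_coord[of h j] by simp
qed

end

lemma fl_Suc: "fl \<omega> (Suc n) = fl \<omega> n + (if \<omega> n then 0 else 1)"
  by (simp add: fl_def)

lemma fl_0[simp]: "fl \<omega> 0 = 0" by (simp add: fl_def)

lemma fl_mono: "i \<le> j \<Longrightarrow> fl \<omega> i \<le> fl \<omega> j"
  by (induction j) (auto simp: fl_Suc le_Suc_eq)

lemma fl_le: "fl \<omega> k \<le> k"
  by (induction k) (auto simp: fl_Suc)

lemma fl_reach: "x \<le> fl \<omega> k \<Longrightarrow> \<exists>k'\<le>k. fl \<omega> k' = x"
proof (induction k)
  case 0 then show ?case by simp
next
  case (Suc k)
  show ?case
  proof (cases "x \<le> fl \<omega> k")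
    case True then show ?thesis using Suc.IH by (meson le_Suc_eq)
  next
    case False
    then have "fl \<omega> (Suc k) = x" using Suc.prems by (auto simp: fl_Suc split: if_splits)
    then show ?thesis by blast
  qed
qed

lemma fl_dep: "(\<And>i. i < n \<Longrightarrow> \<omega> i = \<omega>' i) \<Longrightarrow> fl \<omega> n = fl \<omega>' n"
  unfolding fl_def by (rule sum.cong) auto

definition al :: "nat \<Rightarrow> (nat \<Rightarrow> bool) \<Rightarrow> nat \<Rightarrow> real" where
  "al x \<omega> i = (if fl \<omega> i < x then 1 else 0)"

definition xi :: "(nat \<Rightarrow> bool) \<Rightarrow> nat \<Rightarrow> real" where
  "xi \<omega> i = (if \<omega> i then 1 else -1)"

definition S :: "nat \<Rightarrow> nat \<Rightarrow> (nat \<Rightarrow> bool) \<Rightarrow> real" where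
  "S x n \<omega> = (\<Sum>i<n. al x \<omega> i * xi \<omega> i)"

definition Tn :: "nat \<Rightarrow> nat \<Rightarrow> (nat \<Rightarrow> bool) \<Rightarrow> real" where
  "Tn x n \<omega> = (\<Sum>i<n. al x \<omega> i)"

lemma S_Suc: "S x (Suc n) \<omega> = S x n \<omega> + al x \<omega> n * xi \<omega> n" by (simp add: S_def)
lemma Tn_Suc: "Tn x (Suc n) \<omega> = Tn x n \<omega> + al x \<omega> n" by (simp add: Tn_def)

lemma al_01: "al x \<omega> i = 0 \<or> al x \<omega> i = 1" by (simp add: al_def)

lemma S_sq_Suc: "(S x (Suc n) \<omega>)\<^sup>2 = (S x n \<omega>)\<^sup>2 + 2 * (al x \<omega> n * S x n \<omega>) * xi \<omega> n + al x \<omega> n"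
  by (auto simp: S_Suc al_def xi_def power2_eq_square algebra_simps)

lemma S_bnd: "\<bar>S x n \<omega>\<bar> \<le> n"
proof (induction n)
  case (Suc n) then show ?case by (auto simp: S_Suc al_def xi_def)
qed (simp add: S_def)

lemma Tn_bnd: "0 \<le> Tn x n \<omega> \<and> Tn x n \<omega> \<le> n"
proof (induction n)
  case (Suc n) then show ?case by (auto simp: Tn_Suc al_def)
qed (simp add: Tn_def)

lemma Tn_S: "Tn x n \<omega> = S x n \<omega> + 2 * real (min (fl \<omega> n) x)"
proof (induction n)
  case (Suc n) then show ?case by (auto simp: Tn_Suc S_Suc fl_Suc al_def xi_def)
qed (simp add: Tn_def S_def)

lemma al_dep: "(\<And>i. i < n \<Longrightarrow> \<omega> i = \<omega>' i) \<Longrightarrow> al x \<omega> n = al x \<omega>' n"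
  unfolding al_def using fl_dep by metis

lemma S_dep: "(\<And>i. i < n \<Longrightarrow> \<omega> i = \<omega>' i) \<Longrightarrow> S x n \<omega> = S x n \<omega>'"
  unfolding S_def xi_def
  by (rule sum.cong) (auto intro!: al_dep)

lemma sum_xi: "(\<Sum>i<n. xi \<omega> i) = real n - 2 * real (fl \<omega> n)"
  by (induction n) (auto simp: xi_def fl_Suc)

lemma Tn_mono: "m \<le> n \<Longrightarrow> Tn x m \<omega> \<le> Tn x n \<omega>"
  unfolding Tn_def by (rule sum_mono2) (auto simp: al_def)

lemma Tn_ge: "real (Suc n) * al x \<omega> n \<le> Tn x (Suc n) \<omega>"
proof (cases "fl \<omega> n < x")
  case True
  have "al x \<omega> i = 1" if "i < Suc n" for i
    using fl_mono[of i n \<omega>] that True by (auto simp: al_def)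
  then show ?thesis using True by (simp add: Tn_def al_def)
next
  case False then show ?thesis using Tn_bnd[of x "Suc n" \<omega>] by (simp add: al_def)
qed

locale good =
  fixes x :: nat and \<omega> :: "nat \<Rightarrow> bool"
  assumes reach: "\<exists>k. x \<le> fl \<omega> k"
begin

definition "\<tau> = (LEAST k. fl \<omega> k = x)"

lemma ex_eq: "\<exists>k. fl \<omega> k = x"
  using reach fl_reach by blast

lemma fl_tau: "fl \<omega> \<tau> = x"
  unfolding \<tau>_def using ex_eq by (rule LeastI_ex)

lemma al_iff: "fl \<omega> i < x \<longleftrightarrow> i < \<tau>"
proof
  assume a: "fl \<omega> i < x"
  show "i < \<tau>"
  proof (rule ccontr)
    assume "\<not> i < \<tau>"
    then have "fl \<omega> \<tau> \<le> fl \<omega> i" by (intro fl_mono) simp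
    then show False using a fl_tau by simp
  qed
next
  assume a: "i < \<tau>"
  show "fl \<omega> i < x"
  proof (rule ccontr)
    assume "\<not> fl \<omega> i < x"
    then obtain k where "k \<le> i" "fl \<omega> k = x" using fl_reach by (meson not_le_imp_less not_less)
    then have "\<tau> \<le> k" unfolding \<tau>_def by (metis Least_le)
    then show False using a \<open>k \<le> i\<close> by simp
  qed
qed

lemma x_le_tau: "x \<le> \<tau>" using fl_le[of \<omega> \<tau>] fl_tau by simp

lemma U_eq: "real (U x \<omega>) = real \<tau> - real x"
  using ex_eq x_le_tau by (simp add: U_fl \<tau>_def[symmetric])

lemma al_eq: "al x \<omega> i = (if i < \<tau> then 1 else 0)"
  by (simp add: al_def al_iff)

lemma S_eq: "S x n \<omega> = real (min n \<tau>) - 2 * real (fl \<omega> (min n \<tau>))"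
proof -
  have "S x n \<omega> = (\<Sum>i<min n \<tau>. xi \<omega> i)"
    unfolding S_def al_eq by (rule sum.mono_neutral_cong_right) auto
  then show ?thesis by (simp add: sum_xi)
qed

lemma Tn_eq: "Tn x n \<omega> = real (min n \<tau>)"
proof -
  have "Tn x n \<omega> = (\<Sum>i<min n \<tau>. 1)"
    unfolding Tn_def al_eq by (rule sum.mono_neutral_cong_right) auto
  then show ?thesis by simp
qed

lemma S_abs: "\<bar>S x n \<omega>\<bar> \<le> real (U x \<omega>) + real x"
  using S_eq U_eq fl_le[of \<omega> "min n \<tau>"] fl_mono[of "min n \<tau>" \<tau> \<omega>] fl_tau by auto

lemma S_lim: "(\<lambda>n. S x n \<omega>) \<longlonglongrightarrow> real (U x \<omega>) - real x"
proof (rule LIMSEQ_offset[where k=\<tau>])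
  have "S x (n + \<tau>) \<omega> = real (U x \<omega>) - real x" for n
    using S_eq U_eq fl_tau by (simp add: min_absorb2)
  then show "(\<lambda>n. S x (n + \<tau>) \<omega>) \<longlonglongrightarrow> real (U x \<omega>) - real x" by simp
qed

lemma Tn_lim: "(\<lambda>n. Tn x n \<omega>) \<longlonglongrightarrow> real (U x \<omega>) + real x"
proof (rule LIMSEQ_offset[where k=\<tau>])
  have "Tn x (n + \<tau>) \<omega> = real (U x \<omega>) + real x" for n
    using Tn_eq U_eq by (simp add: min_absorb2)
  then show "(\<lambda>n. Tn x (n + \<tau>) \<omega>) \<longlonglongrightarrow> real (U x \<omega>) + real x" by simp
qed

lemma Tn_le: "Tn x n \<omega> \<le> real (U x \<omega>) + real x"
  using Tn_eq U_eq by simp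

end

context cookie begin

definition "eps i = 2 * p i - 1"

lemma eps_nn: "0 \<le> eps i" using p_bnd[of i] by (simp add: eps_def)
lemma eps_lt1: "eps i < 1" using p_bnd[of i] by (simp add: eps_def)
lemma eps_sum: "summable eps" using p_sum by (simp add: eps_def[abs_def])
lemma delta_eq: "cookie_delta p = suminf eps" by (simp add: cookie_delta_def eps_def[abs_def])
lemma eps_partial: "(\<Sum>i<n. eps i) \<le> cookie_delta p"
  unfolding delta_eq by (rule sum_le_suminf[OF eps_sum]) (auto simp: eps_nn)
lemma delta_nn: "0 \<le> cookie_delta p" using eps_partial[of 0] by simp

lemma meas_al[measurable]: "(\<lambda>\<omega>. al x \<omega> i) \<in> borel_measurable M"
  unfolding al_def by measurable
lemma meas_xi[measurable]: "(\<lambda>\<omega>. xi \<omega> i) \<in> borel_measurable M"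
  unfolding xi_def by measurable
lemma meas_S[measurable]: "(\<lambda>\<omega>. S x n \<omega>) \<in> borel_measurable M"
  unfolding S_def by measurable
lemma meas_Tn[measurable]: "(\<lambda>\<omega>. Tn x n \<omega>) \<in> borel_measurable M"
  unfolding Tn_def by measurable
lemma meas_Ur[measurable]: "(\<lambda>\<omega>. real (U x \<omega>)) \<in> borel_measurable M"
  by measurable

lemma intM: fixes f :: "_ \<Rightarrow> real" and B :: real shows "f \<in> borel_measurable M \<Longrightarrow> (\<And>\<omega>. \<bar>f \<omega>\<bar> \<le> B) \<Longrightarrow> integrable M f"
proof -
  interpret prob_space M by (rule prob)
  show "f \<in> borel_measurable M \<Longrightarrow> (\<And>\<omega>. \<bar>f \<omega>\<bar> \<le> B) \<Longrightarrow> integrable M f"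
    by (rule integrable_const_bound[where B=B]) auto
qed

lemma al_bnd: "\<bar>al x \<omega> i\<bar> \<le> 1" by (simp add: al_def)
lemma xi_bnd: "\<bar>xi \<omega> i\<bar> \<le> 1" by (simp add: xi_def)

lemma int_al[simp]: "integrable M (\<lambda>\<omega>. al x \<omega> i)" by (rule intM[OF meas_al al_bnd])
lemma int_S[simp]: "integrable M (\<lambda>\<omega>. S x n \<omega>)" by (rule intM[OF meas_S S_bnd])
lemma int_Tn[simp]: "integrable M (\<lambda>\<omega>. Tn x n \<omega>)"
  by (rule intM[OF meas_Tn, where B=n]) (use Tn_bnd in \<open>auto simp: abs_le_iff\<close>)
lemma int_S2[simp]: "integrable M (\<lambda>\<omega>. (S x n \<omega>)\<^sup>2)"
proof (rule intM[where B="real n ^ 2"])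
  show "\<bar>(S x n \<omega>)\<^sup>2\<bar> \<le> real n ^ 2" for \<omega>
    using S_bnd[of x n \<omega>] by (metis abs_le_square_iff abs_of_nat abs_power2)
qed measurable
lemma int_alS[simp]: "integrable M (\<lambda>\<omega>. al x \<omega> i * S x n \<omega>)"
proof (rule intM[where B="real n"])
  show "\<bar>al x \<omega> i * S x n \<omega>\<bar> \<le> real n" for \<omega>
    using S_bnd[of x n \<omega>] by (auto simp: al_def)
qed measurable
lemma int_alSxi[simp]: "integrable M (\<lambda>\<omega>. al x \<omega> i * S x n \<omega> * xi \<omega> i)"
proof (rule intM[where B="real n"])
  show "\<bar>al x \<omega> i * S x n \<omega> * xi \<omega> i\<bar> \<le> real n" for \<omega>
    using S_bnd[of x n \<omega>] by (auto simp: al_def xi_def)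
qed measurable
lemma int_alxi[simp]: "integrable M (\<lambda>\<omega>. al x \<omega> i * xi \<omega> i)"
  by (rule intM[where B=1]) (auto simp: al_def xi_def)

lemma E_alxi: "(\<integral>\<omega>. al x \<omega> n * xi \<omega> n \<partial>M) = eps n * (\<integral>\<omega>. al x \<omega> n \<partial>M)"
proof -
  have "(\<integral>\<omega>. al x \<omega> n * (\<lambda>b. if b then 1 else -1) (\<omega> n) \<partial>M)
     = (\<integral>\<omega>. al x \<omega> n \<partial>M) * (1 * p n + (-1) * (1 - p n))"
    using indep_step[OF meas_al al_dep al_bnd, where h="\<lambda>b. if b then 1 else -1"] by simp
  then show ?thesis by (simp add: xi_def eps_def algebra_simps)
qed

lemma E_alSxi: "(\<integral>\<omega>. al x \<omega> n * S x n \<omega> * xi \<omega> n \<partial>M) = eps n * (\<integral>\<omega>. al x \<omega> n * S x n \<omega> \<partial>M)"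
proof -
  have "(\<integral>\<omega>. (al x \<omega> n * S x n \<omega>) * (\<lambda>b. if b then 1 else -1) (\<omega> n) \<partial>M)
     = (\<integral>\<omega>. al x \<omega> n * S x n \<omega> \<partial>M) * (1 * p n + (-1) * (1 - p n))"
  proof -
    have b: "\<bar>al x \<omega> n * S x n \<omega>\<bar> \<le> real n" for \<omega>
      using S_bnd[of x n \<omega>] by (auto simp: al_def)
    have d: "al x \<omega> n * S x n \<omega> = al x \<omega>' n * S x n \<omega>'" if "\<And>i. i < n \<Longrightarrow> \<omega> i = \<omega>' i" for \<omega> \<omega>'
      using al_dep[OF that] S_dep[OF that] by simp
    have m: "(\<lambda>\<omega>. al x \<omega> n * S x n \<omega>) \<in> borel_measurable M" by measurable
    show ?thesis using indep_step[OF m d b, where h="\<lambda>b. if b then 1 else -1"] by simp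
  qed
  then show ?thesis by (simp add: xi_def eps_def algebra_simps)
qed

definition "PA x i = (\<integral>\<omega>. al x \<omega> i \<partial>M)"
definition "ES x n = (\<integral>\<omega>. S x n \<omega> \<partial>M)"
definition "B2 x n = (\<integral>\<omega>. (S x n \<omega>)\<^sup>2 \<partial>M)"
definition "CC x n = (\<integral>\<omega>. al x \<omega> n * S x n \<omega> \<partial>M)"
definition "ET x n = (\<integral>\<omega>. Tn x n \<omega> \<partial>M)"

lemma PA_bnd: "0 \<le> PA x i \<and> PA x i \<le> 1"
proof -
  interpret prob_space M by (rule prob)
  have "(\<integral>\<omega>. al x \<omega> i \<partial>M) \<le> (\<integral>\<omega>. 1 \<partial>M)"
    by (rule integral_mono[OF int_al]) (auto simp: al_def)
  moreover have "0 \<le> (\<integral>\<omega>. al x \<omega> i \<partial>M)"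
    by (rule Bochner_Integration.integral_nonneg) (auto simp: al_def)
  ultimately show ?thesis by (simp add: PA_def)
qed

lemma ES_eq: "ES x n = (\<Sum>i<n. eps i * PA x i)"
proof (induction n)
  case 0 then show ?case by (simp add: ES_def S_def)
next
  case (Suc n)
  have "ES x (Suc n) = ES x n + (\<integral>\<omega>. al x \<omega> n * xi \<omega> n \<partial>M)"
    unfolding ES_def S_Suc by (rule Bochner_Integration.integral_add) auto
  then show ?case using Suc E_alxi by (simp add: PA_def)
qed

lemma ET_eq: "ET x n = (\<Sum>i<n. PA x i)"
  unfolding ET_def Tn_def PA_def by (rule Bochner_Integration.integral_sum) auto

lemma B2_eq: "B2 x n = (\<Sum>k<n. PA x k + 2 * eps k * CC x k)"
proof (induction n)
  case 0 then show ?case by (simp add: B2_def S_def)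
next
  case (Suc n)
  have i2: "integrable M (\<lambda>\<omega>. 2 * (al x \<omega> n * S x n \<omega>) * xi \<omega> n)"
    using int_alSxi[where x=x and i=n and n=n] by (simp add: mult.assoc)
  have "B2 x (Suc n) = B2 x n + (\<integral>\<omega>. 2 * (al x \<omega> n * S x n \<omega>) * xi \<omega> n \<partial>M) + PA x n"
    unfolding B2_def S_sq_Suc PA_def
    using Bochner_Integration.integral_add[OF Bochner_Integration.integrable_add[OF int_S2 i2] int_al]
      Bochner_Integration.integral_add[OF int_S2 i2] by simp
  also have "(\<integral>\<omega>. 2 * (al x \<omega> n * S x n \<omega>) * xi \<omega> n \<partial>M) = 2 * eps n * CC x n"
    using E_alSxi by (simp add: CC_def mult.assoc)
  finally show ?case using Suc by simp
qed

lemma ES_le: "ES x n \<le> cookie_delta p"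
proof -
  have "ES x n \<le> (\<Sum>i<n. eps i)"
    unfolding ES_eq by (rule sum_mono) (use PA_bnd eps_nn in \<open>auto intro: mult_left_le\<close>)
  then show ?thesis using eps_partial[of n] by simp
qed

lemma ET_le: "ET x n \<le> 2 * real x + cookie_delta p"
proof -
  interpret prob_space M by (rule prob)
  have "ET x n = (\<integral>\<omega>. S x n \<omega> + 2 * real (min (fl \<omega> n) x) \<partial>M)"
    unfolding ET_def Tn_S ..
  also have "\<dots> \<le> (\<integral>\<omega>. S x n \<omega> + 2 * real x \<partial>M)"
  proof (rule integral_mono)
    show "integrable M (\<lambda>\<omega>. S x n \<omega> + 2 * real (min (fl \<omega> n) x))"
    proof (rule intM[where B="real n + 2 * real x"])
      fix \<omega>
      have "real (min (fl \<omega> n) x) \<le> real x" by simp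
      moreover have "0 \<le> real (min (fl \<omega> n) x)" by simp
      ultimately show "\<bar>S x n \<omega> + 2 * real (min (fl \<omega> n) x)\<bar> \<le> real n + 2 * real x"
        using S_bnd[of x n \<omega>] unfolding abs_le_iff by linarith
    qed measurable
  qed auto
  also have "\<dots> = ES x n + 2 * real x"
    unfolding ES_def by (subst Bochner_Integration.integral_add) auto
  finally show ?thesis using ES_le[of x n] by simp
qed

lemma abs_int_le_sqrt: 
  assumes fm: "f \<in> borel_measurable M" and fb: "\<And>\<omega>. \<bar>f \<omega>\<bar> \<le> B"
  shows "(\<integral>\<omega>. \<bar>f \<omega>\<bar> \<partial>M) \<le> sqrt (\<integral>\<omega>. (f \<omega>)\<^sup>2 \<partial>M)"
proof -
  interpret prob_space M by (rule prob)
  define m where "m = (\<integral>\<omega>. \<bar>f \<omega>\<bar> \<partial>M)"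
  have i1: "integrable M (\<lambda>\<omega>. \<bar>f \<omega>\<bar>)" by (rule intM[where B=B]) (use fm fb in auto)
  have i2: "integrable M (\<lambda>\<omega>. (f \<omega>)\<^sup>2)"
  proof (rule intM[where B="B^2"])
    show "\<bar>(f \<omega>)\<^sup>2\<bar> \<le> B\<^sup>2" for \<omega>
      using power_mono[OF fb[of \<omega>] abs_ge_zero, of 2] by simp
  qed (use fm in auto)
  have "0 \<le> (\<integral>\<omega>. (\<bar>f \<omega>\<bar> - m)\<^sup>2 \<partial>M)" by (rule Bochner_Integration.integral_nonneg) auto
  also have "(\<integral>\<omega>. (\<bar>f \<omega>\<bar> - m)\<^sup>2 \<partial>M) = (\<integral>\<omega>. (f \<omega>)\<^sup>2 - 2 * m * \<bar>f \<omega>\<bar> + m^2 \<partial>M)"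
    by (rule Bochner_Integration.integral_cong) (auto simp: power2_eq_square algebra_simps)
  also have "\<dots> = (\<integral>\<omega>. (f \<omega>)\<^sup>2 \<partial>M) - 2 * m * m + m^2"
    using i1 i2 by (simp add: m_def prob_space)
  finally have "m^2 \<le> (\<integral>\<omega>. (f \<omega>)\<^sup>2 \<partial>M)" by (simp add: power2_eq_square)
  then show ?thesis unfolding m_def by (rule real_le_rsqrt)
qed

lemma CC_bnd: "\<bar>CC x n\<bar> \<le> sqrt (B2 x n)"
proof -
  interpret prob_space M by (rule prob)
  have "\<bar>CC x n\<bar> \<le> (\<integral>\<omega>. \<bar>al x \<omega> n * S x n \<omega>\<bar> \<partial>M)"
    unfolding CC_def by (rule integral_abs_bound)
  also have "\<dots> \<le> (\<integral>\<omega>. \<bar>S x n \<omega>\<bar> \<partial>M)"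
    by (rule integral_mono) (auto simp: al_def intro!: intM[where B=n] S_bnd)
  also have "\<dots> \<le> sqrt (B2 x n)"
    unfolding B2_def by (rule abs_int_le_sqrt[OF meas_S S_bnd])
  finally show ?thesis .
qed

end

context cookie begin

definition "sK x = cookie_delta p + sqrt ((cookie_delta p)\<^sup>2 + 2 * real x + cookie_delta p)"

lemma sK_nn: "0 \<le> sK x" using delta_nn by (simp add: sK_def)

lemma sK_eq: "2 * real x + cookie_delta p + 2 * cookie_delta p * sK x = (sK x)\<^sup>2"
proof -
  define d where "d = cookie_delta p"
  define r where "r = sqrt (d\<^sup>2 + 2 * real x + d)"
  have c: "0 \<le> d\<^sup>2 + 2 * real x + d" using delta_nn by (simp add: d_def)
  have r2: "r\<^sup>2 = d\<^sup>2 + 2 * real x + d" using c by (simp add: r_def)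
  have "sK x = d + r" by (simp add: sK_def d_def r_def)
  then have "(sK x)\<^sup>2 = d\<^sup>2 + 2 * d * r + r\<^sup>2" by (simp add: power2_sum)
  then show ?thesis using r2 \<open>sK x = d + r\<close> unfolding d_def[symmetric] by (simp add: algebra_simps power2_eq_square)
qed

lemma sum_eps_mult: "(\<Sum>k<n. eps k * c) \<le> cookie_delta p * c" if "0 \<le> c"
proof -
  have "(\<Sum>k<n. eps k * c) = (\<Sum>k<n. eps k) * c" by (rule sum_distrib_right[symmetric])
  also have "\<dots> \<le> cookie_delta p * c" by (rule mult_right_mono[OF eps_partial that])
  finally show ?thesis .
qed

lemma B2_nn: "0 \<le> B2 x n"
  unfolding B2_def by (rule Bochner_Integration.integral_nonneg) auto

lemma sqrt_B2_le: "B2 x k \<le> (sK x)\<^sup>2 \<Longrightarrow> sqrt (B2 x k) \<le> sK x"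
  using real_sqrt_le_mono[of "B2 x k" "(sK x)\<^sup>2"] sK_nn[of x] by simp

lemma B2_split: "B2 x n = ET x n + (\<Sum>k<n. 2 * eps k * CC x k)"
  unfolding B2_eq ET_eq by (rule sum.distrib)

lemma B2_le: "B2 x n \<le> (sK x)\<^sup>2"
proof (induction n rule: less_induct)
  case (less n)
  have "(\<Sum>k<n. 2 * eps k * CC x k) \<le> (\<Sum>k<n. eps k * (2 * sK x))"
  proof (rule sum_mono)
    fix k assume "k \<in> {..<n}"
    then have "B2 x k \<le> (sK x)\<^sup>2" using less by simp
    then have "sqrt (B2 x k) \<le> sK x" by (rule sqrt_B2_le)
    then have "CC x k \<le> sK x" using CC_bnd[of x k] by linarith
    then show "2 * eps k * CC x k \<le> eps k * (2 * sK x)" using eps_nn[of k]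
      by (simp add: mult_left_mono)
  qed
  also have "\<dots> \<le> cookie_delta p * (2 * sK x)" by (rule sum_eps_mult) (use sK_nn in simp)
  finally have "B2 x n \<le> ET x n + cookie_delta p * (2 * sK x)" unfolding B2_split by linarith
  then show ?case using ET_le[of x n] sK_eq[of x] by linarith
qed

lemma B2_ET: "\<bar>B2 x n - ET x n\<bar> \<le> 2 * cookie_delta p * sK x"
proof -
  have "B2 x n - ET x n = (\<Sum>k<n. 2 * eps k * CC x k)" using B2_split[of x n] by linarith
  also have "\<bar>\<dots>\<bar> \<le> (\<Sum>k<n. \<bar>2 * eps k * CC x k\<bar>)" by (rule sum_abs)
  also have "\<dots> \<le> (\<Sum>k<n. eps k * (2 * sK x))"
  proof (rule sum_mono)
    fix k
    have "sqrt (B2 x k) \<le> sK x" by (rule sqrt_B2_le[OF B2_le])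
    then have "\<bar>CC x k\<bar> \<le> sK x" using CC_bnd[of x k] by linarith
    then show "\<bar>2 * eps k * CC x k\<bar> \<le> eps k * (2 * sK x)" using eps_nn[of k]
      by (simp add: abs_mult mult_left_mono)
  qed
  also have "\<dots> \<le> cookie_delta p * (2 * sK x)" by (rule sum_eps_mult) (use sK_nn in simp)
  finally show ?thesis by simp
qed

lemma PA_meas: "measure M {\<omega>. fl \<omega> n < x} = PA x n"
proof -
  have "(\<lambda>\<omega>. al x \<omega> n) = indicator {\<omega>. fl \<omega> n < x}"
    by (auto simp: al_def fun_eq_iff)
  then show ?thesis by (simp add: PA_def)
qed

lemma PA_le: "real (Suc n) * PA x n \<le> 2 * real x + cookie_delta p"
proof -
  have "real (Suc n) * PA x n = (\<integral>\<omega>. real (Suc n) * al x \<omega> n \<partial>M)"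
    by (simp add: PA_def)
  also have "\<dots> \<le> ET x (Suc n)"
    unfolding ET_def by (rule integral_mono) (use Tn_ge in auto)
  finally show ?thesis using ET_le[of x "Suc n"] by linarith
qed

lemma AE_good: "AE \<omega> in M. \<exists>k. x \<le> fl \<omega> k"
proof -
  interpret prob_space M by (rule prob)
  let ?N = "{\<omega>. \<forall>k. fl \<omega> k < x}"
  have "{\<omega>\<in>space M. \<forall>k. fl \<omega> k < x} \<in> sets M" by measurable
  then have Ns: "?N \<in> sets M" by simp
  have le: "measure M ?N \<le> (2 * real x + cookie_delta p) * inverse (real (Suc n))" for n
  proof -
    have "?N \<subseteq> {\<omega>. fl \<omega> n < x}" by auto
    moreover have "{\<omega>\<in>space M. fl \<omega> n < x} \<in> sets M" by measurable
    ultimately have "measure M ?N \<le> measure M {\<omega>. fl \<omega> n < x}"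
      by (intro finite_measure_mono) auto
    also have "\<dots> = PA x n" by (rule PA_meas)
    also have "\<dots> \<le> (2 * real x + cookie_delta p) * inverse (real (Suc n))"
      using PA_le[of n x] by (simp add: field_simps)
    finally show ?thesis .
  qed
  have "(\<lambda>n. (2 * real x + cookie_delta p) * inverse (real (Suc n))) \<longlonglongrightarrow> 0"
    by (rule tendsto_mult_right_zero[OF LIMSEQ_inverse_real_of_nat])
  then have "measure M ?N \<le> 0"
    by (rule LIMSEQ_le_const) (use le in auto)
  then have "emeasure M ?N = 0" by (simp add: emeasure_eq_measure measure_le_0_iff)
  then show ?thesis
    by (subst AE_iff_measurable[OF Ns]) (auto simp: not_le)
qed

end

context cookie begin

lemma Tn_sq_le: "(Tn x n \<omega>)\<^sup>2 \<le> 2 * (S x n \<omega>)\<^sup>2 + 8 * (real x)\<^sup>2"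
proof -
  define b where "b = 2 * real (min (fl \<omega> n) x)"
  have b0: "0 \<le> b" and b1: "b \<le> 2 * real x" by (auto simp: b_def)
  have "b\<^sup>2 \<le> (2 * real x)\<^sup>2" using power_mono[OF b1 b0, of 2] .
  moreover have "(S x n \<omega> + b)\<^sup>2 \<le> 2 * (S x n \<omega>)\<^sup>2 + 2 * b\<^sup>2"
    using sum_squares_bound[of "S x n \<omega>" b] by (simp add: power2_sum power2_diff algebra_simps)
  ultimately show ?thesis unfolding Tn_S b_def[symmetric] by (simp add: power_mult_distrib)
qed

lemma int_Tn2[simp]: "integrable M (\<lambda>\<omega>. (Tn x n \<omega>)\<^sup>2)"
proof (rule intM[where B="real n ^ 2"])
  show "\<bar>(Tn x n \<omega>)\<^sup>2\<bar> \<le> real n ^ 2" for \<omega>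
    using power_mono[of "Tn x n \<omega>" "real n" 2] Tn_bnd[of x n \<omega>] by simp
qed measurable

lemma int_U2: "integrable M (\<lambda>\<omega>. (real (U x \<omega>) + real x)\<^sup>2)"
proof -
  interpret prob_space M by (rule prob)
  let ?I = "\<lambda>n. (\<integral>\<omega>. (Tn x n \<omega>)\<^sup>2 \<partial>M)"
  have inc: "incseq ?I"
  proof (rule incseq_SucI)
    fix n show "?I n \<le> ?I (Suc n)"
    proof (rule integral_mono)
      fix \<omega> show "(Tn x n \<omega>)\<^sup>2 \<le> (Tn x (Suc n) \<omega>)\<^sup>2"
        using power_mono[OF Tn_mono[of n "Suc n" x \<omega>], of 2] Tn_bnd[of x n \<omega>] by simp
    qed auto
  qed
  have bnd: "\<forall>n. ?I n \<le> 2 * (sK x)\<^sup>2 + 8 * (real x)\<^sup>2"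
  proof
    fix n
    have "?I n \<le> (\<integral>\<omega>. 2 * (S x n \<omega>)\<^sup>2 + 8 * (real x)\<^sup>2 \<partial>M)"
      by (rule integral_mono) (auto intro: Tn_sq_le)
    also have "\<dots> = 2 * B2 x n + 8 * (real x)\<^sup>2"
      by (simp add: B2_def)
    also have "\<dots> \<le> 2 * (sK x)\<^sup>2 + 8 * (real x)\<^sup>2" using B2_le[of x n] by simp
    finally show "?I n \<le> 2 * (sK x)\<^sup>2 + 8 * (real x)\<^sup>2" .
  qed
  obtain L where L: "?I \<longlonglongrightarrow> L" using incseq_convergent[OF inc bnd] by blast
  show ?thesis
  proof (rule integrable_monotone_convergence[where f="\<lambda>n \<omega>. (Tn x n \<omega>)\<^sup>2", OF _ _ _ L])
    show "AE \<omega> in M. mono (\<lambda>n. (Tn x n \<omega>)\<^sup>2)"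
    proof (rule AE_I2, rule monoI)
      fix \<omega> and m n :: nat assume "m \<le> n"
      then show "(Tn x m \<omega>)\<^sup>2 \<le> (Tn x n \<omega>)\<^sup>2"
        using power_mono[OF Tn_mono[of m n x \<omega>], of 2] Tn_bnd[of x m \<omega>] by simp
    qed
    show "AE \<omega> in M. (\<lambda>n. (Tn x n \<omega>)\<^sup>2) \<longlonglongrightarrow> (real (U x \<omega>) + real x)\<^sup>2"
      using AE_good[of x]
    proof eventually_elim
      case (elim \<omega>)
      then show ?case using good.Tn_lim[OF good.intro[OF elim]] by (intro tendsto_power)
    qed
  qed auto
qed

lemma int_w1: assumes "1 \<le> x" shows "integrable M (\<lambda>\<omega>. real (U x \<omega>) + real x)"
proof (rule Bochner_Integration.integrable_bound[OF int_U2])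
  show "AE \<omega> in M. norm (real (U x \<omega>) + real x) \<le> norm ((real (U x \<omega>) + real x)\<^sup>2)"
  proof (rule AE_I2)
    fix \<omega>
    have "1 \<le> real (U x \<omega>) + real x" using assms by simp
    then have "real (U x \<omega>) + real x \<le> (real (U x \<omega>) + real x)\<^sup>2"
      by (simp add: power2_eq_square)
    then show "norm (real (U x \<omega>) + real x) \<le> norm ((real (U x \<omega>) + real x)\<^sup>2)" by simp
  qed
qed measurable

lemma int_U: assumes "1 \<le> x" shows "integrable M (\<lambda>\<omega>. real (U x \<omega>))"
  by (rule Bochner_Integration.integrable_bound[OF int_w1[OF assms]]) auto

lemma lim_ES: assumes "1 \<le> x" shows "ES x \<longlonglongrightarrow> EU p x - real x"
proof -
  interpret prob_space M by (rule prob)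
  have "(\<lambda>n. \<integral>\<omega>. S x n \<omega> \<partial>M) \<longlonglongrightarrow> (\<integral>\<omega>. real (U x \<omega>) - real x \<partial>M)"
  proof (rule integral_dominated_convergence[where w="\<lambda>\<omega>. real (U x \<omega>) + real x"])
    show "AE \<omega> in M. (\<lambda>n. S x n \<omega>) \<longlonglongrightarrow> real (U x \<omega>) - real x"
      using AE_good[of x] by eventually_elim (rule good.S_lim[OF good.intro])
    show "AE \<omega> in M. norm (S x n \<omega>) \<le> real (U x \<omega>) + real x" for n
      using AE_good[of x] by eventually_elim (simp add: good.S_abs[OF good.intro])
  qed (use int_w1[OF assms] in auto)
  also have "(\<integral>\<omega>. real (U x \<omega>) - real x \<partial>M) = EU p x - real x"
    using int_U[OF assms] by (simp add: EU_def)
  finally show ?thesis unfolding ES_def .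
qed

lemma lim_ET: assumes "1 \<le> x" shows "ET x \<longlonglongrightarrow> EU p x + real x"
proof -
  interpret prob_space M by (rule prob)
  have "(\<lambda>n. \<integral>\<omega>. Tn x n \<omega> \<partial>M) \<longlonglongrightarrow> (\<integral>\<omega>. real (U x \<omega>) + real x \<partial>M)"
  proof (rule integral_dominated_convergence[where w="\<lambda>\<omega>. real (U x \<omega>) + real x"])
    show "AE \<omega> in M. (\<lambda>n. Tn x n \<omega>) \<longlonglongrightarrow> real (U x \<omega>) + real x"
      using AE_good[of x] by eventually_elim (rule good.Tn_lim[OF good.intro])
    show "AE \<omega> in M. norm (Tn x n \<omega>) \<le> real (U x \<omega>) + real x" for n
      using AE_good[of x] by eventually_elim (use good.Tn_le[OF good.intro] Tn_bnd in auto)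
  qed (use int_w1[OF assms] in auto)
  also have "(\<integral>\<omega>. real (U x \<omega>) + real x \<partial>M) = EU p x + real x"
    using int_U[OF assms] by (simp add: EU_def)
  finally show ?thesis unfolding ET_def .
qed

lemma lim_B2: assumes "1 \<le> x" shows "B2 x \<longlonglongrightarrow> (\<integral>\<omega>. (real (U x \<omega>) - real x)\<^sup>2 \<partial>M)"
proof -
  interpret prob_space M by (rule prob)
  have "(\<lambda>n. \<integral>\<omega>. (S x n \<omega>)\<^sup>2 \<partial>M) \<longlonglongrightarrow> (\<integral>\<omega>. (real (U x \<omega>) - real x)\<^sup>2 \<partial>M)"
  proof (rule integral_dominated_convergence[where w="\<lambda>\<omega>. (real (U x \<omega>) + real x)\<^sup>2"])
    show "AE \<omega> in M. (\<lambda>n. (S x n \<omega>)\<^sup>2) \<longlonglongrightarrow> (real (U x \<omega>) - real x)\<^sup>2"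
      using AE_good[of x] by eventually_elim (intro tendsto_power good.S_lim[OF good.intro])
    show "AE \<omega> in M. norm ((S x n \<omega>)\<^sup>2) \<le> (real (U x \<omega>) + real x)\<^sup>2" for n
      using AE_good[of x]
    proof eventually_elim
      case (elim \<omega>)
      have "\<bar>S x n \<omega>\<bar> \<le> real (U x \<omega>) + real x" by (rule good.S_abs[OF good.intro[OF elim]])
      from power_mono[OF this abs_ge_zero, of 2] show ?case by simp
    qed
  qed (use int_U2 in auto)
  then show ?thesis unfolding B2_def .
qed

end

context cookie begin

lemma PA_one: "i < x \<Longrightarrow> PA x i = 1"
proof -
  interpret prob_space M by (rule prob)
  assume i: "i < x"
  have "\<And>\<omega>. al x \<omega> i = 1" using fl_le i by (auto simp: al_def intro: le_less_trans)
  then show ?thesis by (simp add: PA_def)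
qed

lemma rho_bounds: assumes "1 \<le> x"
  shows "(\<Sum>i<x. eps i) \<le> rho p x \<and> rho p x \<le> cookie_delta p"
proof
  have L: "ES x \<longlonglongrightarrow> rho p x" using lim_ES[OF assms] by (simp add: rho_def)
  show "rho p x \<le> cookie_delta p"
    by (rule LIMSEQ_le_const2[OF L]) (use ES_le in auto)
  show "(\<Sum>i<x. eps i) \<le> rho p x"
  proof (rule LIMSEQ_le_const[OF L], intro exI allI impI)
    fix n assume n: "x \<le> n"
    have "(\<Sum>i<x. eps i) = (\<Sum>i<x. eps i * PA x i)" by (simp add: PA_one)
    also have "\<dots> \<le> (\<Sum>i<n. eps i * PA x i)"
      by (rule sum_mono2) (use n eps_nn PA_bnd in auto)
    also have "\<dots> = ES x n" by (simp add: ES_eq)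
    finally show "(\<Sum>i<x. eps i) \<le> ES x n" .
  qed
qed

lemma E2_bound: assumes "1 \<le> x"
  shows "\<bar>(\<integral>\<omega>. (real (U x \<omega>) - real x)\<^sup>2 \<partial>M) - 2 * real x\<bar> \<le> cookie_delta p + 2 * cookie_delta p * sK x"
proof -
  let ?E2 = "(\<integral>\<omega>. (real (U x \<omega>) - real x)\<^sup>2 \<partial>M)"
  have "(\<lambda>n. \<bar>B2 x n - ET x n\<bar>) \<longlonglongrightarrow> \<bar>?E2 - (EU p x + real x)\<bar>"
    by (intro tendsto_rabs tendsto_diff lim_B2 lim_ET assms)
  then have a: "\<bar>?E2 - (EU p x + real x)\<bar> \<le> 2 * cookie_delta p * sK x"
    by (rule LIMSEQ_le_const2) (use B2_ET in auto)
  have r: "0 \<le> rho p x \<and> rho p x \<le> cookie_delta p"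
    using rho_bounds[OF assms] sum_nonneg[of "{..<x}" eps] eps_nn by fastforce
  have "EU p x + real x = 2 * real x + rho p x" by (simp add: rho_def)
  with a r show ?thesis by (simp add: abs_le_iff)
qed

lemma nu_bound: assumes "1 \<le> x"
  shows "\<bar>nu p x - 2\<bar> \<le> (cookie_delta p + 2 * cookie_delta p * sK x) / real x"
proof -
  let ?E2 = "(\<integral>\<omega>. (real (U x \<omega>) - real x)\<^sup>2 \<partial>M)"
  have x0: "0 < real x" using assms by simp
  have "nu p x - 2 = (?E2 - 2 * real x) / real x"
    using x0 by (simp add: nu_def field_simps)
  then have "\<bar>nu p x - 2\<bar> = \<bar>?E2 - 2 * real x\<bar> / real x" using x0 by simp
  also have "\<dots> \<le> (cookie_delta p + 2 * cookie_delta p * sK x) / real x"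
    using E2_bound[OF assms] x0 by (simp add: divide_right_mono)
  finally show ?thesis .
qed

definition "cst = (cookie_delta p + 2 * cookie_delta p * (cookie_delta p + sqrt ((cookie_delta p)\<^sup>2 + cookie_delta p)))
   + 2 * cookie_delta p * sqrt 2"

lemma cst_nn: "0 \<le> cst" using delta_nn by (simp add: cst_def)

lemma nu_bound2: assumes "1 \<le> x"
  shows "\<bar>nu p x - 2\<bar> \<le> cst / sqrt (real x)"
proof -
  define d where "d = cookie_delta p"
  have d0: "0 \<le> d" using delta_nn by (simp add: d_def)
  have x1: "1 \<le> real x" using assms by simp
  have sx: "1 \<le> sqrt (real x)" using x1 by simp
  have "sqrt (d\<^sup>2 + 2 * real x + d) = sqrt ((d\<^sup>2 + d) + 2 * real x)" by (simp add: algebra_simps)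
  also have "\<dots> \<le> sqrt (d\<^sup>2 + d) + sqrt (2 * real x)"
    by (rule sqrt_add_le_add_sqrt) (use d0 in auto)
  finally have "sK x \<le> (d + sqrt (d\<^sup>2 + d)) + sqrt 2 * sqrt (real x)"
    by (simp add: sK_def d_def[symmetric] real_sqrt_mult)
  then have "2 * d * sK x \<le> 2 * d * ((d + sqrt (d\<^sup>2 + d)) + sqrt 2 * sqrt (real x))"
    using d0 by (intro mult_left_mono) auto
  then have "d + 2 * d * sK x \<le> (d + 2 * d * (d + sqrt (d\<^sup>2 + d))) + (2 * d * sqrt 2) * sqrt (real x)"
    by (simp add: algebra_simps)
  define c0 where "c0 = d + 2 * d * (d + sqrt (d\<^sup>2 + d))"
  define c1 where "c1 = 2 * d * sqrt 2"
  have c0: "0 \<le> c0" and c1: "0 \<le> c1" using d0 by (auto simp: c0_def c1_def)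
  have key: "d + 2 * d * sK x \<le> c0 + c1 * sqrt (real x)"
    using \<open>d + 2 * d * sK x \<le> _\<close> by (simp add: c0_def c1_def)
  have xs: "real x = sqrt (real x) * sqrt (real x)" by simp
  have "(c0 + c1 * sqrt (real x)) / real x = c0 / real x + c1 / sqrt (real x)"
    using sx by (subst xs) (simp add: field_simps)
  also have "c0 / real x \<le> c0 / sqrt (real x)"
  proof -
    have "sqrt (real x) * 1 \<le> sqrt (real x) * sqrt (real x)"
      using sx by (intro mult_left_mono) auto
    then have "sqrt (real x) \<le> real x" by simp
    then show ?thesis using c0 sx by (intro divide_left_mono) auto
  qed
  finally have "(c0 + c1 * sqrt (real x)) / real x \<le> (c0 + c1) / sqrt (real x)"
    by (simp add: add_divide_distrib)
  moreover have "(d + 2 * d * sK x) / real x \<le> (c0 + c1 * sqrt (real x)) / real x"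
    using key x1 by (simp add: divide_right_mono)
  moreover have "c0 + c1 = cst" by (simp add: c0_def c1_def cst_def d_def)
  ultimately show ?thesis using nu_bound[OF assms] by (simp add: d_def)
qed

end

lemma inv_sqrt_lim: "(\<lambda>x::nat. c / sqrt (real x)) \<longlonglongrightarrow> 0"
proof -
  have "(\<lambda>x::nat. 1 / sqrt (real x)) \<longlonglongrightarrow> 0" by real_asymp
  from tendsto_mult[OF tendsto_const[of c] this] show ?thesis by simp
qed

theorem corollary4p3:
  fixes p :: "nat \<Rightarrow> real"
  assumes "\<And>i. 1/2 \<le> p i \<and> p i < 1"
    and "summable (\<lambda>i. 2 * p i - 1)"
  shows "(\<lambda>x. EU p x / real x) \<longlonglongrightarrow> 1
    \<and> theta p \<longlonglongrightarrow> cookie_delta p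
    \<and> (\<exists>C. \<forall>\<^sub>F x in sequentially.
           theta p x \<le> cookie_delta p + C * (ln (real x)) ^ 4 / sqrt (real x))"
proof -
  interpret cookie p using assms by unfold_locales
  define d where "d = cookie_delta p"
  have d0: "0 \<le> d" using delta_nn by (simp add: d_def)
  have ev1: "\<forall>\<^sub>F x in sequentially. (1::nat) \<le> x" by (rule eventually_ge_at_top)
  have rb: "\<forall>\<^sub>F x in sequentially. 0 \<le> rho p x \<and> rho p x \<le> d \<and> (\<Sum>i<x. eps i) \<le> rho p x"
    using ev1
  proof eventually_elim
    case (elim x)
    then show ?case using rho_bounds[OF elim] sum_nonneg[of "{..<x}" eps] eps_nn
      by (fastforce simp: d_def)
  qed
  have nb: "\<forall>\<^sub>F x in sequentially. \<bar>nu p x - 2\<bar> \<le> cst / sqrt (real x)"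
    using ev1 by eventually_elim (rule nu_bound2)
  have P1: "(\<lambda>x. EU p x / real x) \<longlonglongrightarrow> 1"
  proof -
    have r0: "(\<lambda>x. rho p x / real x) \<longlonglongrightarrow> 0"
    proof (rule tendsto_sandwich[of "\<lambda>_. 0" _ _ "\<lambda>x. d / real x"])
      show "\<forall>\<^sub>F x in sequentially. 0 \<le> rho p x / real x" using rb by eventually_elim simp
      show "\<forall>\<^sub>F x in sequentially. rho p x / real x \<le> d / real x" using rb
        by eventually_elim (simp add: divide_right_mono)
    qed (auto intro: lim_const_over_n)
    have "(\<lambda>x. 1 + rho p x / real x) \<longlonglongrightarrow> 1"
      using tendsto_add[OF tendsto_const[of 1] r0] by simp
    moreover have "\<forall>\<^sub>F x in sequentially. 1 + rho p x / real x = EU p x / real x"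
      using ev1 by eventually_elim (simp add: rho_def field_simps)
    ultimately show ?thesis by (rule Lim_transform_eventually)
  qed
  have rho_lim: "(\<lambda>x. rho p x) \<longlonglongrightarrow> d"
  proof (rule tendsto_sandwich[of "\<lambda>x. \<Sum>i<x. eps i" _ _ "\<lambda>_. d"])
    show "(\<lambda>x. \<Sum>i<x. eps i) \<longlonglongrightarrow> d" unfolding d_def delta_eq by (rule summable_LIMSEQ[OF eps_sum])
    show "\<forall>\<^sub>F x in sequentially. (\<Sum>i<x. eps i) \<le> rho p x" using rb by eventually_elim simp
    show "\<forall>\<^sub>F x in sequentially. rho p x \<le> d" using rb by eventually_elim simp
  qed simp
  have nu_lim: "(\<lambda>x. nu p x) \<longlonglongrightarrow> 2"
  proof (rule tendsto_sandwich[of "\<lambda>x. 2 - cst / sqrt (real x)" _ _ "\<lambda>x. 2 + cst / sqrt (real x)"])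
    show "\<forall>\<^sub>F x in sequentially. 2 - cst / sqrt (real x) \<le> nu p x" using nb by eventually_elim (simp add: abs_le_iff)
    show "\<forall>\<^sub>F x in sequentially. nu p x \<le> 2 + cst / sqrt (real x)" using nb by eventually_elim (simp add: abs_le_iff)
    show "(\<lambda>x. 2 - cst / sqrt (real x)) \<longlonglongrightarrow> 2" using tendsto_diff[OF tendsto_const[of 2] inv_sqrt_lim[of cst]] by simp
    show "(\<lambda>x. 2 + cst / sqrt (real x)) \<longlonglongrightarrow> 2" using tendsto_add[OF tendsto_const[of 2] inv_sqrt_lim[of cst]] by simp
  qed
  have P2: "theta p \<longlonglongrightarrow> cookie_delta p"
  proof -
    have "(\<lambda>x. 2 * rho p x / nu p x) \<longlonglongrightarrow> 2 * d / 2"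
      by (intro tendsto_divide tendsto_mult tendsto_const rho_lim nu_lim) simp
    then show ?thesis by (simp add: theta_def[abs_def] d_def)
  qed
  have small: "\<forall>\<^sub>F x in sequentially. cst / sqrt (real x) < 1"
    using order_tendstoD(2)[OF inv_sqrt_lim[of cst]] by simp
  have ev3: "\<forall>\<^sub>F x in sequentially. (3::nat) \<le> x" by (rule eventually_ge_at_top)
  have "\<forall>\<^sub>F x in sequentially. theta p x \<le> d + (d * cst) * (ln (real x)) ^ 4 / sqrt (real x)"
    using rb nb small ev3
  proof eventually_elim
    case (elim x)
    have x3: "3 \<le> real x" using elim by simp
    have sx: "0 < sqrt (real x)" using x3 by simp
    have nu1: "1 \<le> nu p x" using elim(2) elim(3) unfolding abs_le_iff by linarith
    have "1 = ln (exp (1::real))" by simp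
    also have "\<dots> \<le> ln (real x)" using exp_le x3 by (subst ln_le_cancel_iff) auto
    finally have l1: "1 \<le> (ln (real x)) ^ 4" by (rule one_le_power)
    have "theta p x = 2 * rho p x / nu p x" by (simp add: theta_def)
    also have "\<dots> \<le> 2 * d / nu p x" using elim nu1 by (intro divide_right_mono) auto
    also have "\<dots> = d + d * (2 - nu p x) / nu p x" using nu1 by (simp add: field_simps)
    also have "d * (2 - nu p x) / nu p x \<le> d * \<bar>nu p x - 2\<bar>"
    proof -
      have "d * (2 - nu p x) \<le> d * \<bar>nu p x - 2\<bar>" using d0 by (intro mult_left_mono) auto
      also have "\<dots> \<le> d * \<bar>nu p x - 2\<bar> * nu p x"
        using mult_left_mono[OF nu1, of "d * \<bar>nu p x - 2\<bar>"] d0 by simp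
      finally show ?thesis using nu1 by (simp add: divide_le_eq)
    qed
    also have "d * \<bar>nu p x - 2\<bar> \<le> d * (cst / sqrt (real x))" using elim d0 by (intro mult_left_mono) auto
    also have "\<dots> = (d * cst) / sqrt (real x)" by simp
    also have "\<dots> \<le> (d * cst) * (ln (real x)) ^ 4 / sqrt (real x)"
      using mult_left_mono[OF l1, of "d * cst"] sx d0 cst_nn by (intro divide_right_mono) auto
    finally show ?case by simp
  qed
  then have P3: "\<exists>C. \<forall>\<^sub>F x in sequentially. theta p x \<le> cookie_delta p + C * (ln (real x)) ^ 4 / sqrt (real x)"
    unfolding d_def by blast
  from P1 P2 P3 show ?thesis by blast
qed

end
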